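(* There is a universal constant $C>0$ such that the following holds. Let $(\pi,Q)$ and $(\tilde\pi,\tilde Q)$ be two reversible Markov generators (with their stationary distributions) on a finite set $\Omega$, let $\mathcal W$ be a $(Q,\tilde Q)$-flow, and suppose $\pi(\omega)\le a\,\tilde\pi(\omega)$ for all $\omega\in\Omega$, for some $a>0$. Suppose $(\Omega,\tilde\pi,\tilde Q)$ satisfies the MLSI with constant $\tilde\alpha(\tilde Q)$. Then for every $r\ge2$, the $r$-regularized MLSI constant $\alpha_r(Q)$ of $(\Omega,\pi,Q)$ (the smallest constant in the $r$-regularized MLSI) satisfies $$\alpha_r(Q)\le C\,a\,A(\mathcal W,r)\,\tilde\alpha(\tilde Q),$$ where $$A(\mathcal W,r):=\max_{(\omega,\omega'):\,\omega\ne\omega',\,Q(\omega,\omega')>0}\frac{1}{\pi(\omega)Q(\omega,\omega')}\sum_{\mathcal P\in\Gamma(Q,\tilde Q):\,(\omega,\omega')\in\mathcal P}\mathcal W(\mathcal P)\big(1+(|\mathcal P|-1)^2\log r\big),$$ $|\mathcal P|$ is the length (number of steps) of $\mathcal P$, and $(\omega,\omega')\in\mathcal P$ means that $\omega,\omega'$ are consecutive vertices of $\mathcal P$.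
   Context: For a positive function $f$, ${\rm Ent}_\pi(f):=\mathbb E_\pi[f(\log f-\log\mathbb E_\pi f)]$, $\mathcal E_\pi(\log f,f):=\frac12\sum_{\omega,\omega'}\pi(\omega)Q(\omega,\omega')(f(\omega)-f(\omega'))\log\frac{f(\omega)}{f(\omega')}$ (analogously for $(\tilde\pi,\tilde Q)$). MLSI with constant $\alpha$: ${\rm Ent}_\pi(f)\le\alpha\,\mathcal E_\pi(\log f,f)$ for all $f:\Omega\to(0,\infty)$. The graph induced by $Q$ on $\Omega$ joins distinct $\omega,\omega'$ iff $Q(\omega,\omega')\ne0$, with graph distance ${\rm dist}$. A function $f>0$ is $r$-regular if $f(\omega)/f(\omega')\le r^{{\rm dist}(\omega,\omega')}$ for all $\omega,\omega'$; the $r$-regularized MLSI with constant $\alpha_r$ means ${\rm Ent}_\pi(f)\le\alpha_r\mathcal E_\pi(\log f,f)$ for all $r$-regular $f$. For $x,y$ with $\tilde Q(x,y)>0$, $\mathcal P_{x,y}$ is the set of paths $x_0=x,x_1,\dots,x_k=y$ ($k\ge1$) with $Q(x_i,x_{i+1})>0$ for all $i$; $\Gamma(Q,\tilde Q):=\bigcup_{x,y:\tilde Q(x,y)>0}\mathcal P_{x,y}$. A $(Q,\tilde Q)$-flow is a function $\mathcal W:\Gamma(Q,\tilde Q)\to[0,1]$ with $\sum_{P\in\mathcal P_{x,y}}\mathcal W(P)=\tilde\pi(x)\tilde Q(x,y)$ for all $x,y$ with $\tilde Q(x,y)>0$. *)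

theory Defs
  imports "HOL-Analysis.Analysis"
begin

text \<open>State space: a finite set \<open>\<Omega>\<close> of naturals (so that the universal constant
  quantifies over all finite state spaces).  Generators are functions
  \<open>Q :: nat \<Rightarrow> nat \<Rightarrow> real\<close>, only their values on \<open>\<Omega>\<close> matter.\<close>

definition markov_generator :: "nat set \<Rightarrow> (nat \<Rightarrow> nat \<Rightarrow> real) \<Rightarrow> bool" where
  "markov_generator \<Omega> Q \<longleftrightarrow>
     (\<forall>x\<in>\<Omega>. \<forall>y\<in>\<Omega>. x \<noteq> y \<longrightarrow> Q x y \<ge> 0) \<and>
     (\<forall>x\<in>\<Omega>. (\<Sum>y\<in>\<Omega>. Q x y) = 0)"

definition reversible_gen :: "nat set \<Rightarrow> (nat \<Rightarrow> real) \<Rightarrow> (nat \<Rightarrow> nat \<Rightarrow> real) \<Rightarrow> bool" where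
  "reversible_gen \<Omega> \<pi> Q \<longleftrightarrow>
     markov_generator \<Omega> Q \<and>
     (\<forall>x\<in>\<Omega>. \<pi> x > 0) \<and> (\<Sum>x\<in>\<Omega>. \<pi> x) = 1 \<and>
     (\<forall>x\<in>\<Omega>. \<forall>y\<in>\<Omega>. \<pi> x * Q x y = \<pi> y * Q y x)"

definition Ent :: "nat set \<Rightarrow> (nat \<Rightarrow> real) \<Rightarrow> (nat \<Rightarrow> real) \<Rightarrow> real" where
  "Ent \<Omega> \<pi> f = (\<Sum>x\<in>\<Omega>. \<pi> x * (f x * (ln (f x) - ln (\<Sum>y\<in>\<Omega>. \<pi> y * f y))))"

definition Dir :: "nat set \<Rightarrow> (nat \<Rightarrow> real) \<Rightarrow> (nat \<Rightarrow> nat \<Rightarrow> real) \<Rightarrow> (nat \<Rightarrow> real) \<Rightarrow> real" where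
  "Dir \<Omega> \<pi> Q f = (1/2) * (\<Sum>x\<in>\<Omega>. \<Sum>y\<in>\<Omega>. \<pi> x * Q x y * (f x - f y) * ln (f x / f y))"

definition MLSI :: "nat set \<Rightarrow> (nat \<Rightarrow> real) \<Rightarrow> (nat \<Rightarrow> nat \<Rightarrow> real) \<Rightarrow> real \<Rightarrow> bool" where
  "MLSI \<Omega> \<pi> Q \<alpha> \<longleftrightarrow>
     (\<forall>f. (\<forall>x\<in>\<Omega>. f x > 0) \<longrightarrow> Ent \<Omega> \<pi> f \<le> \<alpha> * Dir \<Omega> \<pi> Q f)"

text \<open>Walks in the graph induced by \<open>Q\<close> (edges: distinct \<open>x,y\<close> with \<open>Q x y \<noteq> 0\<close>);
  a walk of length \<open>n\<close> is a vertex list of length \<open>n+1\<close>.\<close>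
definition graph_walk :: "nat set \<Rightarrow> (nat \<Rightarrow> nat \<Rightarrow> real) \<Rightarrow> nat list \<Rightarrow> bool" where
  "graph_walk \<Omega> Q xs \<longleftrightarrow> xs \<noteq> [] \<and> set xs \<subseteq> \<Omega> \<and>
     (\<forall>i. Suc i < length xs \<longrightarrow> xs ! i \<noteq> xs ! Suc i \<and> Q (xs ! i) (xs ! Suc i) \<noteq> 0)"

definition graph_dist :: "nat set \<Rightarrow> (nat \<Rightarrow> nat \<Rightarrow> real) \<Rightarrow> nat \<Rightarrow> nat \<Rightarrow> enat" where
  "graph_dist \<Omega> Q x y = Inf {enat (length xs - 1) | xs.
      graph_walk \<Omega> Q xs \<and> hd xs = x \<and> last xs = y}"

definition regular :: "nat set \<Rightarrow> (nat \<Rightarrow> nat \<Rightarrow> real) \<Rightarrow> real \<Rightarrow> (nat \<Rightarrow> real) \<Rightarrow> bool" where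
  "regular \<Omega> Q r f \<longleftrightarrow> (\<forall>x\<in>\<Omega>. f x > 0) \<and>
     (\<forall>x\<in>\<Omega>. \<forall>y\<in>\<Omega>. graph_dist \<Omega> Q x y \<noteq> \<infinity> \<longrightarrow>
        f x / f y \<le> r ^ the_enat (graph_dist \<Omega> Q x y))"

text \<open>The \<open>r\<close>-regularized MLSI constant (smallest constant); \<open>\<infinity>\<close> if none exists.\<close>
definition alpha_reg :: "nat set \<Rightarrow> (nat \<Rightarrow> real) \<Rightarrow> (nat \<Rightarrow> nat \<Rightarrow> real) \<Rightarrow> real \<Rightarrow> ennreal" where
  "alpha_reg \<Omega> \<pi> Q r = Inf {ennreal \<alpha> | \<alpha>. \<alpha> \<ge> 0 \<and>
     (\<forall>f. regular \<Omega> Q r f \<longrightarrow> Ent \<Omega> \<pi> f \<le> \<alpha> * Dir \<Omega> \<pi> Q f)}"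

definition paths :: "nat set \<Rightarrow> (nat \<Rightarrow> nat \<Rightarrow> real) \<Rightarrow> nat \<Rightarrow> nat \<Rightarrow> nat list set" where
  "paths \<Omega> Q x y = {P. length P \<ge> 2 \<and> set P \<subseteq> \<Omega> \<and> hd P = x \<and> last P = y \<and>
      (\<forall>i. Suc i < length P \<longrightarrow> Q (P ! i) (P ! Suc i) > 0)}"

definition Gamma :: "nat set \<Rightarrow> (nat \<Rightarrow> nat \<Rightarrow> real) \<Rightarrow> (nat \<Rightarrow> nat \<Rightarrow> real) \<Rightarrow> nat list set" where
  "Gamma \<Omega> Q Qt = (\<Union>x\<in>\<Omega>. \<Union>y\<in>\<Omega>. if Qt x y > 0 then paths \<Omega> Q x y else {})"

definition is_flow :: "nat set \<Rightarrow> (nat \<Rightarrow> nat \<Rightarrow> real) \<Rightarrow> (nat \<Rightarrow> real) \<Rightarrow> (nat \<Rightarrow> nat \<Rightarrow> real)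
     \<Rightarrow> (nat list \<Rightarrow> real) \<Rightarrow> bool" where
  "is_flow \<Omega> Q \<pi>t Qt W \<longleftrightarrow>
     (\<forall>P\<in>Gamma \<Omega> Q Qt. 0 \<le> W P \<and> W P \<le> 1) \<and>
     (\<forall>x\<in>\<Omega>. \<forall>y\<in>\<Omega>. Qt x y > 0 \<longrightarrow> (W has_sum (\<pi>t x * Qt x y)) (paths \<Omega> Q x y))"

definition edge_in :: "nat \<Rightarrow> nat \<Rightarrow> nat list \<Rightarrow> bool" where
  "edge_in x y P \<longleftrightarrow> (\<exists>i. Suc i < length P \<and> P ! i = x \<and> P ! Suc i = y)"

text \<open>The congestion \<open>A(W,r)\<close>, computed in \<open>ennreal\<close> (nonnegative, possibly infinite sums).\<close>
definition congestion :: "nat set \<Rightarrow> (nat \<Rightarrow> real) \<Rightarrow> (nat \<Rightarrow> nat \<Rightarrow> real) \<Rightarrow> (nat \<Rightarrow> nat \<Rightarrow> real)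
     \<Rightarrow> (nat list \<Rightarrow> real) \<Rightarrow> real \<Rightarrow> ennreal" where
  "congestion \<Omega> \<pi> Q Qt W r = (SUP e \<in> {(x,y). x \<in> \<Omega> \<and> y \<in> \<Omega> \<and> x \<noteq> y \<and> Q x y > 0}.
      ennreal (1 / (\<pi> (fst e) * Q (fst e) (snd e))) *
      (\<Sum>\<^sub>\<infinity>P\<in>{P\<in>Gamma \<Omega> Q Qt. edge_in (fst e) (snd e) P}.
          ennreal (W P * (1 + (real (length P - 1) - 1)^2 * ln r))))"

end

theory Submission
  imports Defs
begin


lemma phi_nonneg:
  fixes u v :: real assumes "u > 0" "v > 0"
  shows "0 \<le> (u - v) * ln (u / v)"
proof (cases "u \<ge> v")
  case True
  then have "u / v \<ge> 1" using assms by simp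
  then show ?thesis using True by simp
next
  case False
  then have "u / v \<le> 1" using assms by simp
  then have "ln (u/v) \<le> 0" using assms by simp
  then show ?thesis using False by (simp add: mult_nonpos_nonpos)
qed

lemma phi_ab_aux:
  fixes a b :: real assumes "b > 0" "a \<ge> b"
  shows "2*(a-b)^2 \<le> (a^2 - b^2) * (2*ln(a/b))"
    and "(a^2-b^2)*(2*ln(a/b)) \<le> (a-b)^2*(4 + 2*ln(a/b))"
proof -
  have a0: "a > 0" using assms by simp
  have l1: "ln (b/a) \<le> b/a - 1" using assms a0 by (intro ln_le_minus_one) simp
  have "ln (a/b) = - ln (b/a)" using assms a0 by (simp add: ln_div)
  then have h: "ln (a/b) \<ge> (a-b)/a" using l1 a0 by (simp add: field_simps)
  have s: "a^2 - b^2 = (a-b)*(a+b)" by (simp add: power2_eq_square algebra_simps)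
  have nn: "a^2 - b^2 \<ge> 0" using s assms by simp
  have "(a^2 - b^2) * (2*((a-b)/a)) \<le> (a^2 - b^2) * (2*ln(a/b))"
    using h nn by (intro mult_left_mono) auto
  moreover have "(a^2 - b^2) * (2*((a-b)/a)) = 2*(a-b)^2 * ((a+b)/a)"
    using a0 s by (simp add: field_simps power2_eq_square)
  moreover have "2*(a-b)^2 \<le> 2*(a-b)^2 * ((a+b)/a)"
  proof -
    have "(a+b)/a \<ge> 1" using a0 assms by (simp add: field_simps)
    then show ?thesis by (intro mult_le_cancel_left1[THEN iffD2]) (auto intro: mult_right_mono) 
  qed
  ultimately show "2*(a-b)^2 \<le> (a^2 - b^2) * (2*ln(a/b))" by linarith
  have l2: "ln (a/b) \<le> a/b - 1" using assms a0 by (intro ln_le_minus_one) simp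
  then have "b * ln (a/b) \<le> a - b" using assms by (simp add: field_simps)
  then have "(a+b) * ln (a/b) \<le> (a-b) * (2 + ln (a/b))" by (simp add: algebra_simps)
  then have "2*(a-b)*((a+b) * ln (a/b)) \<le> 2*(a-b)*((a-b) * (2 + ln (a/b)))"
    using assms by (intro mult_left_mono) auto
  then show "(a^2-b^2)*(2*ln(a/b)) \<le> (a-b)^2*(4 + 2*ln(a/b))"
    by (simp add: s power2_eq_square algebra_simps)
qed

lemma phi_bounds:
  fixes u v :: real assumes "u > 0" "v > 0"
  shows "2*(sqrt u - sqrt v)^2 \<le> (u - v) * ln (u / v)"
    and "(u - v) * ln (u / v) \<le> (sqrt u - sqrt v)^2 * (4 + \<bar>ln u - ln v\<bar>)"
proof -
  have key: "2*(sqrt x - sqrt y)^2 \<le> (x - y) * ln (x / y) \<and>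
     (x - y) * ln (x / y) \<le> (sqrt x - sqrt y)^2 * (4 + \<bar>ln x - ln y\<bar>)"
    if "x > 0" "y > 0" "x \<ge> y" for x y :: real
  proof -
    define a b where "a = sqrt x" "b = sqrt y"
    have ab: "b > 0" "a \<ge> b" "x = a^2" "y = b^2" using that by (auto simp: a_b_def)
    have lx: "ln (x/y) = 2*ln(a/b)"
    proof -
      have "x/y = (a/b)^2" using ab by (simp add: power_divide)
      moreover have "a/b > 0" using ab by simp
      ultimately show ?thesis by (simp add: ln_realpow)
    qed
    have lxy: "\<bar>ln x - ln y\<bar> = 2*ln(a/b)"
      using ab lx that by (simp add: ln_div)
    have e1: "(x - y) * ln(x/y) = (a^2-b^2)*(2*ln(a/b))" using ab lx by simp
    have e2: "sqrt x - sqrt y = a - b" by (simp add: a_b_def)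
    show ?thesis using phi_ab_aux[OF ab(1,2)] unfolding e1 e2 lxy by linarith
  qed
  have sym: "(u - v) * ln (u / v) = (v - u) * ln (v / u)" using assms
    by (simp add: ln_div algebra_simps)
  have sym2: "\<bar>ln u - ln v\<bar> = \<bar>ln v - ln u\<bar>" by simp
  have sym3: "(sqrt u - sqrt v)^2 = (sqrt v - sqrt u)^2" by (simp add: power2_commute)
  show "2*(sqrt u - sqrt v)^2 \<le> (u - v) * ln (u / v)"
    using key[of u v] key[of v u] assms sym sym3 by (cases "u \<ge> v") auto
  show "(u - v) * ln (u / v) \<le> (sqrt u - sqrt v)^2 * (4 + \<bar>ln u - ln v\<bar>)"
    using key[of u v] key[of v u] assms sym sym2 sym3 by (cases "u \<ge> v") auto
qed



lemma edge_in_Nil[simp]: "\<not> edge_in u v []" and edge_in_single[simp]: "\<not> edge_in u v [x]"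
  by (auto simp: edge_in_def)

lemma edge_in_Cons2: "edge_in u v (x # y # R) \<longleftrightarrow> (u = x \<and> v = y) \<or> edge_in u v (y # R)"
proof
  assume "edge_in u v (x # y # R)"
  then obtain i where i: "Suc i < length (x#y#R)" "(x#y#R) ! i = u" "(x#y#R) ! Suc i = v"
    by (auto simp: edge_in_def)
  show "(u = x \<and> v = y) \<or> edge_in u v (y # R)"
  proof (cases i)
    case 0 then show ?thesis using i by auto
  next
    case (Suc j) then show ?thesis using i unfolding edge_in_def
      by (intro disjI2 exI[of _ j]) auto
  qed
next
  assume "(u = x \<and> v = y) \<or> edge_in u v (y # R)"
  then show "edge_in u v (x # y # R)"
  proof
    assume "u = x \<and> v = y" then show ?thesis unfolding edge_in_def by (intro exI[of _ 0]) auto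
  next
    assume "edge_in u v (y # R)"
    then obtain i where "Suc i < length (y#R)" "(y#R) ! i = u" "(y#R) ! Suc i = v"
      by (auto simp: edge_in_def)
    then show ?thesis unfolding edge_in_def by (intro exI[of _ "Suc i"]) auto
  qed
qed

lemma edge_in_set: "edge_in u v P \<Longrightarrow> u \<in> set P \<and> v \<in> set P"
  by (auto simp: edge_in_def)

lemma edge_in_append: "edge_in u v S \<Longrightarrow> edge_in u v (pre @ S)"
proof -
  assume "edge_in u v S"
  then obtain i where i: "Suc i < length S" "S ! i = u" "S ! Suc i = v" by (auto simp: edge_in_def)
  show ?thesis unfolding edge_in_def
    by (rule exI[of _ "length pre + i"]) (use i in \<open>auto simp: nth_append\<close>)
qed

lemma EP_image: "{(u,v). edge_in u v P} = (\<lambda>i. (P!i, P!Suc i)) ` {..<length P - 1}"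
proof
  show "{(u,v). edge_in u v P} \<subseteq> (\<lambda>i. (P!i, P!Suc i)) ` {..<length P - 1}"
    unfolding edge_in_def by (auto simp: image_def)
  show "(\<lambda>i. (P!i, P!Suc i)) ` {..<length P - 1} \<subseteq> {(u,v). edge_in u v P}"
  proof
    fix e assume "e \<in> (\<lambda>i. (P!i, P!Suc i)) ` {..<length P - 1}"
    then obtain i where "i < length P - 1" "e = (P!i, P!Suc i)" by auto
    moreover have "Suc i < length P" using \<open>i < length P - 1\<close> by simp
    ultimately show "e \<in> {(u,v). edge_in u v P}" unfolding edge_in_def by (auto intro!: exI[of _ i])
  qed
qed

lemma EP_finite: "finite {(u,v). edge_in u v P}"
  by (simp add: EP_image)

lemma EP_card: "card {(u,v). edge_in u v P} \<le> length P - 1"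
  unfolding EP_image by (rule order.trans[OF card_image_le]) auto

lemma telescope:
  fixes g :: "nat \<Rightarrow> real"
  shows "P \<noteq> [] \<Longrightarrow> \<bar>g (hd P) - g (last P)\<bar> \<le> (\<Sum>e\<in>{(u,v). edge_in u v P}. \<bar>g (fst e) - g (snd e)\<bar>)"
proof (induction "length P" arbitrary: P rule: less_induct)
  case less
  show ?case
  proof (cases P)
    case Nil then show ?thesis using less by simp
  next
    case (Cons x P')
    show ?thesis
    proof (cases P')
      case Nil then show ?thesis using Cons by simp
    next
      case (Cons y R)
      note P = \<open>P = x # P'\<close> Cons
      show ?thesis
      proof (cases "x \<in> set P'")
        case True
        then obtain pre suf where ps: "P' = pre @ x # suf" by (meson split_list)
        have "length (pre @ x # suf) = length (y # R)" using P ps by simp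
        then have len: "length (x # suf) < length P" using P by simp
        have IH: "\<bar>g (hd (x#suf)) - g (last (x#suf))\<bar> \<le> (\<Sum>e\<in>{(u,v). edge_in u v (x#suf)}. \<bar>g (fst e) - g (snd e)\<bar>)"
          using less(1)[OF len] by simp
        have "last (x#suf) = last (pre @ x # suf)" by simp
        also have "\<dots> = last P'" using ps by simp
        also have "\<dots> = last P" using \<open>P = x # P'\<close> \<open>P' = y # R\<close> by simp
        finally have lst: "last (x#suf) = last P" .
        have sub: "{(u,v). edge_in u v (x#suf)} \<subseteq> {(u,v). edge_in u v P}"
        proof
          fix e assume "e \<in> {(u,v). edge_in u v (x#suf)}"
          then have "edge_in (fst e) (snd e) (pre @ x # suf)" by (auto intro: edge_in_append)
          then have "edge_in (fst e) (snd e) (y # R)" using P ps by simp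
          then show "e \<in> {(u,v). edge_in u v P}" using P by (auto simp: edge_in_Cons2)
        qed
        have "(\<Sum>e\<in>{(u,v). edge_in u v (x#suf)}. \<bar>g (fst e) - g (snd e)\<bar>) \<le> (\<Sum>e\<in>{(u,v). edge_in u v P}. \<bar>g (fst e) - g (snd e)\<bar>)"
          by (rule sum_mono2[OF EP_finite sub]) auto
        then show ?thesis using IH lst P by simp
      next
        case False
        have len: "length P' < length P" using P by simp
        have IH: "\<bar>g (hd P') - g (last P')\<bar> \<le> (\<Sum>e\<in>{(u,v). edge_in u v P'}. \<bar>g (fst e) - g (snd e)\<bar>)"
          using less(1)[OF len] P by simp
        have eq: "{(u,v). edge_in u v P} = insert (x,y) {(u,v). edge_in u v P'}"
          using P by (auto simp: edge_in_Cons2)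
        have nin: "(x,y) \<notin> {(u,v). edge_in u v P'}" using False edge_in_set by blast
        have "(\<Sum>e\<in>{(u,v). edge_in u v P}. \<bar>g (fst e) - g (snd e)\<bar>) = \<bar>g x - g y\<bar> + (\<Sum>e\<in>{(u,v). edge_in u v P'}. \<bar>g (fst e) - g (snd e)\<bar>)"
          unfolding eq by (subst sum.insert[OF EP_finite nin]) auto
        then show ?thesis using IH P by simp
      qed
    qed
  qed
qed



lemma arith_k:
  fixes k L :: real assumes "k \<ge> 2" "L \<ge> 1/2"
  shows "k/2 * (4 + k*L) \<le> 10 * (1 + (k - 1)^2 * L)"
proof -
  have h0: "(3*k-2)*(k-2) \<ge> 0" using assms by (intro mult_nonneg_nonneg) auto
  have h1: "k^2 \<le> 4*(k-1)^2" using h0 by (simp add: power2_eq_square algebra_simps)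
  have h2': "k^2 * L \<le> (4*(k-1)^2) * L" using h1 assms by (intro mult_right_mono) auto
  have h2: "k^2 * L \<le> 4*((k-1)^2 * L)" using h2' by (simp only: mult.assoc)
  have h3: "(k-1) \<le> (k-1)^2" using assms by (simp add: power2_eq_square)
  have h4: "(k-1)^2 * (1/2) \<le> (k-1)^2 * L" using assms by (intro mult_left_mono) auto
  have Y: "(k-1)^2 * L \<ge> 0" using assms by simp
  have "k/2 * (4 + k*L) = 2*k + (k^2*L)/2" by (simp add: power2_eq_square algebra_simps)
  also have "\<dots> \<le> 10 + 10 * ((k - 1)^2 * L)" using h2 h3 h4 Y by linarith
  also have "\<dots> = 10 * (1 + (k - 1)^2 * L)" by (simp add: algebra_simps)
  finally show ?thesis .
qed

lemma path_bound:
  fixes f :: "nat \<Rightarrow> real" and P :: "nat list" and L :: real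
  assumes pos: "\<forall>x\<in>set P. f x > 0" and len: "length P \<ge> 2" and L: "L \<ge> 1/2"
    and edge: "\<forall>u v. edge_in u v P \<longrightarrow> \<bar>ln (f u) - ln (f v)\<bar> \<le> L"
  shows "(f (hd P) - f (last P)) * ln (f (hd P) / f (last P)) \<le>
    10 * (1 + (real (length P - 1) - 1)^2 * L) *
    (\<Sum>e\<in>{(u,v). edge_in u v P}. (f (fst e) - f (snd e)) * ln (f (fst e) / f (snd e)))"
    (is "?lhs \<le> 10 * ?w * ?S")
proof -
  define E where "E = {(u,v). edge_in u v P}"
  have finE: "finite E" unfolding E_def by (rule EP_finite)
  have Eset: "fst e \<in> set P \<and> snd e \<in> set P" if "e \<in> E" for e
    using that edge_in_set unfolding E_def by auto
  have Snn: "?S \<ge> 0" unfolding E_def[symmetric]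
    by (intro sum_nonneg phi_nonneg) (use Eset pos in auto)
  have Pne: "P \<noteq> []" using len by auto
  have hdl: "hd P \<in> set P" "last P \<in> set P" using Pne by auto
  show ?thesis
  proof (cases "length P = 2")
    case True
    then obtain x y where P: "P = [x,y]"
      by (auto simp: length_Suc_conv numeral_2_eq_2)
    have "E = {(x,y)}" unfolding E_def P by (auto simp: edge_in_Cons2)
    then have "?S = ?lhs" unfolding E_def[symmetric] using P by simp
    moreover have "length P - 1 = 1" using True by simp
    then have w1: "?w = 1" by simp
    ultimately show ?thesis using Snn unfolding w1 by linarith
  next
    case False
    define k where "k = real (length P - 1)"
    have k2: "k \<ge> 2" using False len unfolding k_def by linarith
    define m where "m = card E"
    have mk: "real m \<le> k" unfolding m_def k_def E_def using EP_card by (simp add: of_nat_le_iff)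
    define a where "a = (\<lambda>x. sqrt (f x))"
    define D where "D = (\<Sum>e\<in>E. \<bar>a (fst e) - a (snd e)\<bar>)"
    have t1: "\<bar>a (hd P) - a (last P)\<bar> \<le> D" unfolding D_def E_def by (rule telescope[OF Pne])
    have t2: "D^2 \<le> real m * (\<Sum>e\<in>E. (a (fst e) - a (snd e))^2)"
      using Cauchy_Schwarz_ineq_sum[of "\<lambda>_. 1" "\<lambda>e. \<bar>a (fst e) - a (snd e)\<bar>" E]
      unfolding D_def m_def by simp
    have t3: "(\<Sum>e\<in>E. (a (fst e) - a (snd e))^2) \<le> ?S / 2"
    proof -
      have "(\<Sum>e\<in>E. (a (fst e) - a (snd e))^2) \<le> (\<Sum>e\<in>E. (f (fst e) - f (snd e)) * ln (f (fst e) / f (snd e)) / 2)"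
      proof (intro sum_mono)
        fix e assume "e \<in> E"
        then have "f (fst e) > 0" "f (snd e) > 0" using Eset pos by auto
        from phi_bounds(1)[OF this]
        show "(a (fst e) - a (snd e))^2 \<le> (f (fst e) - f (snd e)) * ln (f (fst e) / f (snd e)) / 2"
          unfolding a_def by simp
      qed
      then show ?thesis unfolding E_def[symmetric] by (simp add: sum_divide_distrib)
    qed
    have t4: "\<bar>ln (f (hd P)) - ln (f (last P))\<bar> \<le> k * L"
    proof -
      have "\<bar>ln (f (hd P)) - ln (f (last P))\<bar> \<le> (\<Sum>e\<in>E. \<bar>ln (f (fst e)) - ln (f (snd e))\<bar>)"
        unfolding E_def by (rule telescope[OF Pne])
      also have "\<dots> \<le> (\<Sum>e\<in>E. L)" by (intro sum_mono) (use edge in \<open>auto simp: E_def\<close>)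
      also have "\<dots> = real m * L" by (simp add: m_def)
      also have "\<dots> \<le> k * L" using mk L by (intro mult_right_mono) auto
      finally show ?thesis .
    qed
    have t5: "?lhs \<le> (a (hd P) - a (last P))^2 * (4 + \<bar>ln (f (hd P)) - ln (f (last P))\<bar>)"
      unfolding a_def by (rule phi_bounds(2)) (use pos hdl in auto)
    have "(a (hd P) - a (last P))^2 \<le> D^2"
    proof -
      have "\<bar>a (hd P) - a (last P)\<bar>^2 \<le> D^2" by (rule power_mono[OF t1]) simp
      then show ?thesis by simp
    qed
    also have "\<dots> \<le> real m * (?S/2)" using t2 order.trans[OF t2 mult_left_mono[OF t3]] by simp
    also have "\<dots> \<le> k * (?S/2)" using mk Snn by (intro mult_right_mono) auto
    finally have t6: "(a (hd P) - a (last P))^2 \<le> k * (?S/2)" .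
    have "?lhs \<le> k * (?S/2) * (4 + k * L)"
    proof -
      have "(a (hd P) - a (last P))^2 * (4 + \<bar>ln (f (hd P)) - ln (f (last P))\<bar>) \<le> k * (?S/2) * (4 + k * L)"
        using t6 t4 k2 Snn by (intro mult_mono) auto
      then show ?thesis using t5 by linarith
    qed
    also have "\<dots> = (k/2 * (4 + k*L)) * ?S" by (simp add: algebra_simps)
    also have "\<dots> \<le> (10 * (1 + (k - 1)^2 * L)) * ?S"
      using arith_k[OF k2 L] Snn by (intro mult_right_mono) auto
    finally show ?thesis unfolding k_def by simp
  qed
qed



lemma gen_diag:
  assumes "markov_generator \<Omega> Q" "finite \<Omega>" "x \<in> \<Omega>"
  shows "Q x x \<le> 0"
proof -
  have "0 = (\<Sum>y\<in>\<Omega>. Q x y)" using assms unfolding markov_generator_def by auto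
  also have "\<dots> = Q x x + (\<Sum>y\<in>\<Omega>-{x}. Q x y)" using assms by (simp add: sum.remove)
  finally have e: "Q x x = - (\<Sum>y\<in>\<Omega>-{x}. Q x y)" by linarith
  have "(\<Sum>y\<in>\<Omega>-{x}. Q x y) \<ge> 0" using assms unfolding markov_generator_def
    by (intro sum_nonneg) auto
  then show ?thesis using e by linarith
qed

lemma gen_pos_neq:
  assumes "markov_generator \<Omega> Q" "finite \<Omega>" "x \<in> \<Omega>" "Q x y > 0"
  shows "x \<noteq> y"
  using gen_diag[OF assms(1-3)] assms(4) by auto

lemma gen_offdiag:
  assumes "markov_generator \<Omega> Q" "x \<in> \<Omega>" "y \<in> \<Omega>" "x \<noteq> y"
  shows "Q x y \<ge> 0"
  using assms unfolding markov_generator_def by auto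

lemma rev_pos_sym:
  assumes "reversible_gen \<Omega> \<pi> Q" "x \<in> \<Omega>" "y \<in> \<Omega>" "Q x y > 0"
  shows "Q y x > 0"
proof -
  have "\<pi> x > 0" "\<pi> y > 0" "\<pi> x * Q x y = \<pi> y * Q y x" using assms unfolding reversible_gen_def by auto
  then have "\<pi> y * Q y x > 0" using assms(4) by (metis mult_pos_pos)
  then show ?thesis using \<open>\<pi> y > 0\<close> by (simp add: zero_less_mult_iff)
qed

lemma dist_edge:
  assumes "x \<in> \<Omega>" "y \<in> \<Omega>" "x \<noteq> y" "Q x y \<noteq> 0"
  shows "\<exists>n\<le>1. graph_dist \<Omega> Q x y = enat n"
proof -
  have "graph_walk \<Omega> Q [x,y]" unfolding graph_walk_def using assms
    by (auto simp: less_Suc_eq)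
  then have "enat 1 \<in> {enat (length xs - 1) | xs. graph_walk \<Omega> Q xs \<and> hd xs = x \<and> last xs = y}"
    by (intro CollectI exI[of _ "[x,y]"]) auto
  then have "graph_dist \<Omega> Q x y \<le> enat 1" unfolding graph_dist_def by (rule Inf_lower)
  moreover obtain n where n: "graph_dist \<Omega> Q x y = enat n" using enat_ile calculation by blast
  ultimately have "n \<le> 1" by simp
  with n show ?thesis by auto
qed

lemma regular_edge:
  assumes rg: "reversible_gen \<Omega> \<pi> Q" and fin: "finite \<Omega>" and reg: "regular \<Omega> Q r f" and r: "r \<ge> 1"
    and xy: "x \<in> \<Omega>" "y \<in> \<Omega>" "Q x y > 0"
  shows "\<bar>ln (f x) - ln (f y)\<bar> \<le> ln r"
proof -
  have mg: "markov_generator \<Omega> Q" using rg unfolding reversible_gen_def by simp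
  have yx: "Q y x > 0" by (rule rev_pos_sym[OF rg xy(1,2,3)])
  have ne: "x \<noteq> y" using gen_pos_neq[OF mg fin xy(1,3)] .
  have regd1: "\<forall>x\<in>\<Omega>. f x > 0" using reg unfolding regular_def by simp
  have regd2: "\<And>x y. x\<in>\<Omega> \<Longrightarrow> y\<in>\<Omega> \<Longrightarrow> graph_dist \<Omega> Q x y \<noteq> \<infinity> \<Longrightarrow>
        f x / f y \<le> r ^ the_enat (graph_dist \<Omega> Q x y)" using reg unfolding regular_def by simp
  have fpos: "f x > 0" "f y > 0" using regd1 xy(1,2) by simp_all
  have bound: "f u / f v \<le> r" if uv: "u \<in> \<Omega>" "v \<in> \<Omega>" "u \<noteq> v" "Q u v \<noteq> 0" for u v
  proof -
    obtain n where n: "n \<le> 1" "graph_dist \<Omega> Q u v = enat n" using dist_edge[of u \<Omega> v Q, OF uv] by blast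
    have "f u / f v \<le> r ^ the_enat (graph_dist \<Omega> Q u v)" by (rule regd2[OF uv(1,2)]) (simp add: n(2))
    then have "f u / f v \<le> r ^ n" using n(2) by simp
    also have "r ^ n \<le> r"
    proof (cases "n = 0")
      case True then show ?thesis using r by simp
    next
      case False then have "n = 1" using n(1) by simp
      then show ?thesis by simp
    qed
    finally show ?thesis .
  qed
  have b1: "f x / f y \<le> r" by (rule bound[OF xy(1,2) ne]) (use xy(3) in simp)
  have b2: "f y / f x \<le> r" by (rule bound[OF xy(2,1) ne[symmetric]]) (use yx in simp)
  have r0: "r > 0" using r by simp
  have "ln (f x) - ln (f y) = ln (f x / f y)" using fpos by (simp add: ln_div)
  also have "\<dots> \<le> ln r" using ln_le_cancel_iff[of "f x / f y" r] b1 fpos r0 by simp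
  finally have l1: "ln (f x) - ln (f y) \<le> ln r" .
  have "ln (f y) - ln (f x) = ln (f y / f x)" using fpos by (simp add: ln_div)
  also have "\<dots> \<le> ln r" using ln_le_cancel_iff[of "f y / f x" r] b2 fpos r0 by simp
  finally have l2: "ln (f y) - ln (f x) \<le> ln r" .
  show ?thesis using l1 l2 by linarith
qed

lemma ennreal_has_sum:
  fixes g :: "'a \<Rightarrow> real"
  assumes "(g has_sum s) A" "\<And>x. x \<in> A \<Longrightarrow> g x \<ge> 0"
  shows "infsum (\<lambda>x. ennreal (g x)) A = ennreal s"
proof -
  have sm: "g summable_on A" using assms(1) by (auto simp: summable_on_def)
  have s: "infsum g A = s" using assms(1) by (rule infsumI)
  have "infsum (ennreal \<circ> g) A = ennreal (infsum g A)"
  proof (rule infsum_comm_additive_general[OF _ _ sm])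
    show "\<And>F. finite F \<Longrightarrow> F \<subseteq> A \<Longrightarrow> sum (ennreal \<circ> g) F = ennreal (sum g F)"
      using assms(2) by (auto intro!: sum_ennreal)
    show "isCont ennreal (infsum g A)"
      unfolding isCont_def by (intro tendsto_ennrealI tendsto_ident_at)
  qed
  then show ?thesis using s by (simp add: o_def)
qed

lemma infsum_cmult_ennreal:
  fixes g :: "'a \<Rightarrow> ennreal"
  shows "infsum (\<lambda>x. c * g x) A = c * infsum g A"
proof -
  have "infsum (\<lambda>x. c * g x) A = (SUP F\<in>{F. finite F \<and> F\<subseteq>A}. sum (\<lambda>x. c * g x) F)"
    by (rule nonneg_infsum_complete) simp
  also have "\<dots> = (SUP F\<in>{F. finite F \<and> F\<subseteq>A}. c * sum g F)" by (simp add: sum_distrib_left)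
  also have "\<dots> = c * (SUP F\<in>{F. finite F \<and> F\<subseteq>A}. sum g F)" by (simp add: SUP_mult_left_ennreal)
  also have "(SUP F\<in>{F. finite F \<and> F\<subseteq>A}. sum g F) = infsum g A"
    by (rule nonneg_infsum_complete[symmetric]) simp
  finally show ?thesis .
qed

lemma infsum_finsum_ennreal:
  fixes g :: "'i \<Rightarrow> 'a \<Rightarrow> ennreal"
  assumes "finite I"
  shows "infsum (\<lambda>x. \<Sum>i\<in>I. g i x) A = (\<Sum>i\<in>I. infsum (g i) A)"
  using assms
proof (induction I rule: finite_induct)
  case empty then show ?case by simp
next
  case (insert i I)
  have "infsum (\<lambda>x. \<Sum>j\<in>insert i I. g j x) A = infsum (\<lambda>x. g i x + (\<Sum>j\<in>I. g j x)) A"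
    using insert by simp
  also have "\<dots> = infsum (g i) A + infsum (\<lambda>x. \<Sum>j\<in>I. g j x) A"
    by (rule infsum_add; rule nonneg_summable_on_complete; simp)
  finally show ?case using insert by simp
qed



lemma term_nonneg:
  assumes "markov_generator \<Omega> Q" "x \<in> \<Omega>" "y \<in> \<Omega>" "\<pi> x > 0" "f x > 0" "f y > 0"
  shows "0 \<le> \<pi> x * Q x y * (f x - f y) * ln (f x / f y)"
proof (cases "x = y")
  case True then show ?thesis by simp
next
  case False
  have "Q x y \<ge> 0" using gen_offdiag[OF assms(1-3) False] .
  then have p: "0 \<le> \<pi> x * Q x y" using assms by simp
  have q: "0 \<le> (f x - f y) * ln (f x / f y)" using assms phi_nonneg[of "f x" "f y"] by simp
  have "0 \<le> (\<pi> x * Q x y) * ((f x - f y) * ln (f x / f y))" by (rule mult_nonneg_nonneg[OF p q])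
  then show ?thesis by (simp add: mult.assoc)
qed

lemma Dir_nonneg:
  assumes "reversible_gen \<Omega> \<pi> Q" "\<forall>x\<in>\<Omega>. f x > 0"
  shows "Dir \<Omega> \<pi> Q f \<ge> 0"
proof -
  have mg: "markov_generator \<Omega> Q" and pp: "\<forall>x\<in>\<Omega>. \<pi> x > 0" using assms unfolding reversible_gen_def by auto
  show ?thesis unfolding Dir_def
    by (intro mult_nonneg_nonneg sum_nonneg term_nonneg[OF mg]) (use pp assms(2) in auto)
qed

lemma Ent_compare:
  assumes fin: "finite \<Omega>" and r1: "reversible_gen \<Omega> \<pi> Q" and r2: "reversible_gen \<Omega> \<pi>t Qt"
    and a: "\<forall>x\<in>\<Omega>. \<pi> x \<le> a * \<pi>t x" and f: "\<forall>x\<in>\<Omega>. f x > 0"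
  shows "Ent \<Omega> \<pi> f \<le> a * Ent \<Omega> \<pi>t f"
proof -
  have pp: "\<forall>x\<in>\<Omega>. \<pi> x > 0" "(\<Sum>x\<in>\<Omega>. \<pi> x) = 1" using r1 unfolding reversible_gen_def by auto
  have pt: "\<forall>x\<in>\<Omega>. \<pi>t x > 0" "(\<Sum>x\<in>\<Omega>. \<pi>t x) = 1" using r2 unfolding reversible_gen_def by auto
  have ne: "\<Omega> \<noteq> {}" using pp(2) by auto
  define m where "m = (\<Sum>y\<in>\<Omega>. \<pi> y * f y)"
  define mt where "mt = (\<Sum>y\<in>\<Omega>. \<pi>t y * f y)"
  have m0: "m > 0" unfolding m_def using fin ne pp f by (intro sum_pos) auto
  have mt0: "mt > 0" unfolding mt_def using fin ne pt f by (intro sum_pos) auto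
  define \<psi> where "\<psi> = (\<lambda>x. f x * (ln (f x) - ln mt) - f x + mt)"
  have psi0: "\<psi> x \<ge> 0" if "x \<in> \<Omega>" for x
  proof -
    have fx: "f x > 0" using f that by auto
    have "ln (mt / f x) \<le> mt / f x - 1" using fx mt0 by (intro ln_le_minus_one) simp
    then have "ln mt - ln (f x) \<le> mt / f x - 1" using fx mt0 by (simp add: ln_div)
    then have "f x * (ln mt - ln (f x)) \<le> f x * (mt / f x - 1)" using fx by (intro mult_left_mono) auto
    then show ?thesis unfolding \<psi>_def using fx by (simp add: algebra_simps)
  qed
  have e1: "(\<Sum>x\<in>\<Omega>. \<pi> x * \<psi> x) = Ent \<Omega> \<pi> f + (m * (ln m - ln mt) - m + mt)"
  proof -
    have "(\<Sum>x\<in>\<Omega>. \<pi> x * \<psi> x) = (\<Sum>x\<in>\<Omega>. \<pi> x * (f x * (ln (f x) - ln m)) + ((\<pi> x * f x) * (ln m - ln mt) - \<pi> x * f x + \<pi> x * mt))"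
      unfolding \<psi>_def by (intro sum.cong) (auto simp: algebra_simps)
    also have "\<dots> = Ent \<Omega> \<pi> f + ((\<Sum>x\<in>\<Omega>. \<pi> x * f x) * (ln m - ln mt) - (\<Sum>x\<in>\<Omega>. \<pi> x * f x) + (\<Sum>x\<in>\<Omega>. \<pi> x) * mt)"
      unfolding Ent_def by (simp add: sum.distrib sum_subtractf sum_distrib_right m_def)
    finally show ?thesis unfolding m_def[symmetric] pp(2) by simp
  qed
  have e2: "(\<Sum>x\<in>\<Omega>. \<pi>t x * \<psi> x) = Ent \<Omega> \<pi>t f"
  proof -
    have "(\<Sum>x\<in>\<Omega>. \<pi>t x * \<psi> x) = (\<Sum>x\<in>\<Omega>. \<pi>t x * (f x * (ln (f x) - ln mt)) + (\<pi>t x * mt - \<pi>t x * f x))"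
      unfolding \<psi>_def by (intro sum.cong) (auto simp: algebra_simps)
    also have "\<dots> = Ent \<Omega> \<pi>t f + ((\<Sum>x\<in>\<Omega>. \<pi>t x) * mt - (\<Sum>x\<in>\<Omega>. \<pi>t x * f x))"
      unfolding Ent_def by (simp add: sum.distrib sum_subtractf sum_distrib_right mt_def)
    finally show ?thesis unfolding mt_def[symmetric] pt(2) by simp
  qed
  have gap: "m * (ln m - ln mt) - m + mt \<ge> 0"
  proof -
    have "ln (mt / m) \<le> mt / m - 1" using m0 mt0 by (intro ln_le_minus_one) simp
    then have "ln mt - ln m \<le> mt / m - 1" using m0 mt0 by (simp add: ln_div)
    then have "m * (ln mt - ln m) \<le> m * (mt / m - 1)" using m0 by (intro mult_left_mono) auto
    then show ?thesis using m0 by (simp add: algebra_simps)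
  qed
  have "Ent \<Omega> \<pi> f \<le> (\<Sum>x\<in>\<Omega>. \<pi> x * \<psi> x)" using e1 gap by linarith
  also have "\<dots> \<le> (\<Sum>x\<in>\<Omega>. a * \<pi>t x * \<psi> x)"
    by (intro sum_mono mult_right_mono) (use a psi0 in auto)
  also have "\<dots> = a * Ent \<Omega> \<pi>t f" unfolding e2[symmetric] by (simp add: sum_distrib_left mult.assoc)
  finally show ?thesis .
qed



lemma ln_ge_half: "r \<ge> 2 \<Longrightarrow> ln r \<ge> (1/2::real)"
proof -
  assume r: "r \<ge> 2"
  have "exp (1/2::real) * exp (1/2) = exp 1" by (simp add: exp_add[symmetric])
  then have sq: "exp (1/2::real) * exp (1/2) \<le> 3" using exp_le by simp
  have "exp (1/2::real) \<le> 2"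
  proof (rule ccontr)
    assume "\<not> exp (1/2::real) \<le> 2"
    then have "exp (1/2::real) > 2" by simp
    then have "exp (1/2::real) * exp (1/2) > 2 * 2" by (intro mult_strict_mono) auto
    then show False using sq by simp
  qed
  then have "exp (1/2::real) \<le> r" using r by simp
  then have "ln (exp (1/2::real)) \<le> ln r" using r by (subst ln_le_cancel_iff) auto
  then show ?thesis by simp
qed

lemma paths_facts:
  assumes "P \<in> paths \<Omega> Q x y"
  shows "length P \<ge> 2" "set P \<subseteq> \<Omega>" "hd P = x" "last P = y"
    "\<And>u v. edge_in u v P \<Longrightarrow> u \<in> \<Omega> \<and> v \<in> \<Omega> \<and> Q u v > 0"
proof -
  show "length P \<ge> 2" "set P \<subseteq> \<Omega>" "hd P = x" "last P = y" using assms by (auto simp: paths_def)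
  fix u v assume "edge_in u v P"
  then obtain i where i: "Suc i < length P" "P ! i = u" "P ! Suc i = v" by (auto simp: edge_in_def)
  have "Q (P ! i) (P ! Suc i) > 0" using assms i(1) by (auto simp: paths_def)
  moreover have "P ! i \<in> set P" "P ! Suc i \<in> set P" using i(1) by auto
  ultimately show "u \<in> \<Omega> \<and> v \<in> \<Omega> \<and> Q u v > 0" using \<open>set P \<subseteq> \<Omega>\<close> i by auto
qed

lemma Gamma_iff: "P \<in> Gamma \<Omega> Q Qt \<longleftrightarrow> (\<exists>x\<in>\<Omega>. \<exists>y\<in>\<Omega>. Qt x y > 0 \<and> P \<in> paths \<Omega> Q x y)"
  unfolding Gamma_def by (auto split: if_splits)

lemma Gamma_edge:
  assumes "P \<in> Gamma \<Omega> Q Qt" "edge_in u v P"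
  shows "u \<in> \<Omega> \<and> v \<in> \<Omega> \<and> Q u v > 0"
  using assms paths_facts(5) unfolding Gamma_iff by blast



lemma Dir_compare:
  assumes fin: "finite \<Omega>" and r1: "reversible_gen \<Omega> \<pi> Q" and r2: "reversible_gen \<Omega> \<pi>t Qt"
    and fl: "is_flow \<Omega> Q \<pi>t Qt W" and r: "r \<ge> 2" and reg: "regular \<Omega> Q r f"
    and cong: "congestion \<Omega> \<pi> Q Qt W r = ennreal A" and A0: "A \<ge> 0"
  shows "Dir \<Omega> \<pi>t Qt f \<le> 10 * A * Dir \<Omega> \<pi> Q f"
proof -
  have mg1: "markov_generator \<Omega> Q" and pp: "\<forall>x\<in>\<Omega>. \<pi> x > 0" using r1 unfolding reversible_gen_def by auto
  have mg2: "markov_generator \<Omega> Qt" and ppt: "\<forall>x\<in>\<Omega>. \<pi>t x > 0" using r2 unfolding reversible_gen_def by auto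
  have fpos: "\<forall>x\<in>\<Omega>. f x > 0" using reg unfolding regular_def by simp
  have L: "ln r \<ge> 1/2" using ln_ge_half[OF r] .
  define \<Phi> where "\<Phi> = (\<lambda>u v. (f u - f v) * ln (f u / f v))"
  have \<Phi>0: "\<Phi> u v \<ge> 0" if "u \<in> \<Omega>" "v \<in> \<Omega>" for u v
    unfolding \<Phi>_def using fpos that by (intro phi_nonneg) auto
  define w where "w = (\<lambda>P::nat list. 1 + (real (length P - 1) - 1)^2 * ln r)"
  have w1: "w P \<ge> 1" for P unfolding w_def using L by simp
  define \<Gamma> where "\<Gamma> = Gamma \<Omega> Q Qt"
  have Wnn: "W P \<ge> 0" if "P \<in> \<Gamma>" for P using fl that unfolding is_flow_def \<Gamma>_def by auto
  define tm where "tm = (\<lambda>(p::nat\<Rightarrow>real) (q::nat\<Rightarrow>nat\<Rightarrow>real) x y. p x * q x y * (f x - f y) * ln (f x / f y))"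
  have tm\<Phi>: "tm p q x y = p x * q x y * \<Phi> x y" for p q x y unfolding tm_def \<Phi>_def by (simp add: mult.assoc)
  have tm0: "tm \<pi> Q x y \<ge> 0" if "x \<in> \<Omega>" "y \<in> \<Omega>" for x y
    unfolding tm_def by (rule term_nonneg[OF mg1 that]) (use pp fpos that in auto)
  have tmt0: "tm \<pi>t Qt x y \<ge> 0" if "x \<in> \<Omega>" "y \<in> \<Omega>" for x y
    unfolding tm_def by (rule term_nonneg[OF mg2 that]) (use ppt fpos that in auto)
  define OM where "OM = \<Omega> \<times> \<Omega>"
  have finOM: "finite OM" unfolding OM_def using fin by simp
  define h where "h = (\<lambda>P. \<Sum>e\<in>OM. ennreal (10 * W P * w P * (if edge_in (fst e) (snd e) P then \<Phi> (fst e) (snd e) else 0)))"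

  have pathb: "\<Phi> (hd P) (last P) \<le> 10 * w P * (\<Sum>e\<in>OM. (if edge_in (fst e) (snd e) P then \<Phi> (fst e) (snd e) else 0))"
    if PG: "P \<in> \<Gamma>" for P
  proof -
    obtain x y where xy: "x \<in> \<Omega>" "y \<in> \<Omega>" "Qt x y > 0" "P \<in> paths \<Omega> Q x y"
      using PG unfolding \<Gamma>_def Gamma_iff by blast
    have pf: "length P \<ge> 2" "set P \<subseteq> \<Omega>" using paths_facts[OF xy(4)] by auto
    have edge: "\<forall>u v. edge_in u v P \<longrightarrow> \<bar>ln (f u) - ln (f v)\<bar> \<le> ln r"
    proof (intro allI impI)
      fix u v assume "edge_in u v P"
      then have "u \<in> \<Omega> \<and> v \<in> \<Omega> \<and> Q u v > 0" using paths_facts(5)[OF xy(4)] by blast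
      then show "\<bar>ln (f u) - ln (f v)\<bar> \<le> ln r" using regular_edge[OF r1 fin reg] r by auto
    qed
    have "\<Phi> (hd P) (last P) \<le> 10 * w P * (\<Sum>e\<in>{(u,v). edge_in u v P}. \<Phi> (fst e) (snd e))"
      unfolding \<Phi>_def w_def by (rule path_bound) (use pf fpos L edge in auto)
    also have "{(u,v). edge_in u v P} = {e\<in>OM. edge_in (fst e) (snd e) P}"
      using paths_facts(5)[OF xy(4)] unfolding OM_def by auto
    also have "(\<Sum>e\<in>{e\<in>OM. edge_in (fst e) (snd e) P}. \<Phi> (fst e) (snd e)) =
        (\<Sum>e\<in>OM. (if edge_in (fst e) (snd e) P then \<Phi> (fst e) (snd e) else 0))"
      by (rule sum.inter_filter[OF finOM])
    finally show ?thesis .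
  qed

  define St where "St = (\<Sum>x\<in>\<Omega>. \<Sum>y\<in>\<Omega>. tm \<pi>t Qt x y)"
  define S where "S = (\<Sum>x\<in>\<Omega>. \<Sum>y\<in>\<Omega>. tm \<pi> Q x y)"
  define T where "T = {e\<in>OM. Qt (fst e) (snd e) > 0}"
  have finT: "finite T" unfolding T_def using finOM by simp

  have step1: "ennreal St = (\<Sum>e\<in>T. ennreal (tm \<pi>t Qt (fst e) (snd e)))"
  proof -
    have "St = (\<Sum>e\<in>OM. tm \<pi>t Qt (fst e) (snd e))"
      unfolding St_def OM_def sum.cartesian_product by (simp add: case_prod_beta)
    also have "\<dots> = (\<Sum>e\<in>T. tm \<pi>t Qt (fst e) (snd e))"
    proof (rule sum.mono_neutral_right[OF finOM])
      show "T \<subseteq> OM" unfolding T_def by auto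
      show "\<forall>e\<in>OM - T. tm \<pi>t Qt (fst e) (snd e) = 0"
      proof
        fix e assume e: "e \<in> OM - T"
        show "tm \<pi>t Qt (fst e) (snd e) = 0"
        proof (cases "fst e = snd e")
          case True then show ?thesis unfolding tm_def by simp
        next
          case False
          have "Qt (fst e) (snd e) \<ge> 0" using gen_offdiag[OF mg2 _ _ False] e unfolding OM_def by auto
          then have "Qt (fst e) (snd e) = 0" using e unfolding T_def by auto
          then show ?thesis unfolding tm_def by simp
        qed
      qed
    qed
    finally show ?thesis using tmt0 unfolding T_def OM_def by (subst sum_ennreal) auto
  qed

  have step2: "ennreal (tm \<pi>t Qt (fst e) (snd e)) \<le> infsum h (paths \<Omega> Q (fst e) (snd e))" if "e \<in> T" for e
  proof -
    obtain x y where e: "e = (x,y)" by (cases e)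
    have xy: "x \<in> \<Omega>" "y \<in> \<Omega>" "Qt x y > 0" using that unfolding T_def OM_def e by auto
    have hs: "(W has_sum (\<pi>t x * Qt x y)) (paths \<Omega> Q x y)" using fl xy unfolding is_flow_def by blast
    have sub: "paths \<Omega> Q x y \<subseteq> \<Gamma>" unfolding \<Gamma>_def using xy by (auto simp: Gamma_iff; blast)
    have hs2: "((\<lambda>P. W P * \<Phi> x y) has_sum (\<pi>t x * Qt x y * \<Phi> x y)) (paths \<Omega> Q x y)"
      by (rule has_sum_cmult_left[OF hs])
    have "ennreal (tm \<pi>t Qt x y) = infsum (\<lambda>P. ennreal (W P * \<Phi> x y)) (paths \<Omega> Q x y)"
      unfolding tm\<Phi> by (rule ennreal_has_sum[OF hs2, symmetric]) (use Wnn sub \<Phi>0 xy in auto)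
    also have "\<dots> \<le> infsum h (paths \<Omega> Q x y)"
    proof (rule infsum_mono)
      show "(\<lambda>P. ennreal (W P * \<Phi> x y)) summable_on paths \<Omega> Q x y" by (rule nonneg_summable_on_complete) simp
      show "h summable_on paths \<Omega> Q x y" by (rule nonneg_summable_on_complete) simp
      fix P assume P: "P \<in> paths \<Omega> Q x y"
      then have PG: "P \<in> \<Gamma>" using sub by auto
      have hl: "hd P = x" "last P = y" using paths_facts[OF P] by auto
      have nn: "\<And>e. e \<in> OM \<Longrightarrow> 0 \<le> 10 * W P * w P * (if edge_in (fst e) (snd e) P then \<Phi> (fst e) (snd e) else 0)"
        using Wnn[OF PG] w1[of P] \<Phi>0 unfolding OM_def by auto
      have "W P * \<Phi> x y \<le> W P * (10 * w P * (\<Sum>e\<in>OM. (if edge_in (fst e) (snd e) P then \<Phi> (fst e) (snd e) else 0)))"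
        using pathb[OF PG] hl Wnn[OF PG] by (intro mult_left_mono) auto
      also have "\<dots> = (\<Sum>e\<in>OM. 10 * W P * w P * (if edge_in (fst e) (snd e) P then \<Phi> (fst e) (snd e) else 0))"
        by (simp add: sum_distrib_left mult.assoc mult.left_commute)
      finally have "ennreal (W P * \<Phi> x y) \<le> ennreal (\<Sum>e\<in>OM. 10 * W P * w P * (if edge_in (fst e) (snd e) P then \<Phi> (fst e) (snd e) else 0))"
        by (rule ennreal_leI)
      also have "\<dots> = h P" unfolding h_def using nn by (subst sum_ennreal) auto
      finally show "ennreal (W P * \<Phi> x y) \<le> h P" .
    qed
    finally show ?thesis unfolding e by simp
  qed

  have step3: "(\<Sum>e\<in>T. infsum h (paths \<Omega> Q (fst e) (snd e))) = infsum h \<Gamma>"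
  proof -
    have "infsum h \<Gamma> = infsum (\<lambda>P. \<Sum>e\<in>T. (if P \<in> paths \<Omega> Q (fst e) (snd e) then h P else 0)) \<Gamma>"
    proof (rule infsum_cong)
      fix P assume P: "P \<in> \<Gamma>"
      obtain x y where xy: "x \<in> \<Omega>" "y \<in> \<Omega>" "Qt x y > 0" "P \<in> paths \<Omega> Q x y"
        using P unfolding \<Gamma>_def Gamma_iff by blast
      have hl: "hd P = x" "last P = y" using paths_facts[OF xy(4)] by auto
      have iff: "P \<in> paths \<Omega> Q (fst e) (snd e) \<longleftrightarrow> e = (x,y)" for e
        using paths_facts(3,4)[of P \<Omega> Q "fst e" "snd e"] hl xy(4) by (cases e) auto
      have inT: "(x,y) \<in> T" unfolding T_def OM_def using xy by auto
      have "(\<Sum>e\<in>T. (if P \<in> paths \<Omega> Q (fst e) (snd e) then h P else 0)) = (\<Sum>e\<in>T. (if e = (x,y) then h P else 0))"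
        by (intro sum.cong) (auto simp: iff)
      also have "\<dots> = h P" using inT finT by simp
      finally show "h P = (\<Sum>e\<in>T. (if P \<in> paths \<Omega> Q (fst e) (snd e) then h P else 0))" by simp
    qed
    also have "\<dots> = (\<Sum>e\<in>T. infsum (\<lambda>P. if P \<in> paths \<Omega> Q (fst e) (snd e) then h P else 0) \<Gamma>)"
      by (rule infsum_finsum_ennreal[OF finT])
    also have "\<dots> = (\<Sum>e\<in>T. infsum h (paths \<Omega> Q (fst e) (snd e)))"
    proof (rule sum.cong[OF refl])
      fix e assume e: "e \<in> T"
      have sub: "paths \<Omega> Q (fst e) (snd e) \<subseteq> \<Gamma>" unfolding \<Gamma>_def using e unfolding T_def OM_def by (auto simp: Gamma_iff; blast)
      show "infsum (\<lambda>P. if P \<in> paths \<Omega> Q (fst e) (snd e) then h P else 0) \<Gamma> = infsum h (paths \<Omega> Q (fst e) (snd e))"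
        by (rule infsum_cong_neutral) (use sub in auto)
    qed
    finally show ?thesis by simp
  qed

  have step4: "infsum h \<Gamma> = (\<Sum>e\<in>OM. infsum (\<lambda>P. ennreal (10 * W P * w P * (if edge_in (fst e) (snd e) P then \<Phi> (fst e) (snd e) else 0))) \<Gamma>)"
    unfolding h_def by (rule infsum_finsum_ennreal[OF finOM])

  have step5: "infsum (\<lambda>P. ennreal (10 * W P * w P * (if edge_in (fst e) (snd e) P then \<Phi> (fst e) (snd e) else 0))) \<Gamma>
      \<le> ennreal (10 * A * tm \<pi> Q (fst e) (snd e))" if "e \<in> OM" for e
  proof -
    obtain u v where e: "e = (u,v)" by (cases e)
    have uv: "u \<in> \<Omega>" "v \<in> \<Omega>" using that unfolding OM_def e by auto
    show ?thesis
    proof (cases "Q u v > 0")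
      case False
      have "infsum (\<lambda>P. ennreal (10 * W P * w P * (if edge_in u v P then \<Phi> u v else 0))) \<Gamma> = infsum (\<lambda>P. 0) \<Gamma>"
        by (rule infsum_cong) (use Gamma_edge False in \<open>auto simp: \<Gamma>_def\<close>)
      then show ?thesis unfolding e fst_conv snd_conv by simp
    next
      case True
      have ne: "u \<noteq> v" using gen_pos_neq[OF mg1 fin uv(1) True] .
      define c where "c = ennreal (10 * \<Phi> u v)"
      define B where "B = infsum (\<lambda>P. ennreal (W P * w P)) {P\<in>\<Gamma>. edge_in u v P}"
      have "infsum (\<lambda>P. ennreal (10 * W P * w P * (if edge_in u v P then \<Phi> u v else 0))) \<Gamma>
          = infsum (\<lambda>P. c * (if edge_in u v P then ennreal (W P * w P) else 0)) \<Gamma>"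
      proof (rule infsum_cong)
        fix P assume P: "P \<in> \<Gamma>"
        show "ennreal (10 * W P * w P * (if edge_in u v P then \<Phi> u v else 0)) = c * (if edge_in u v P then ennreal (W P * w P) else 0)"
        proof (cases "edge_in u v P")
          case True
          have eq: "10 * W P * w P * \<Phi> u v = (10 * \<Phi> u v) * (W P * w P)" by (simp add: algebra_simps)
          have "10 * \<Phi> u v \<ge> 0" "W P * w P \<ge> 0" using \<Phi>0[OF uv] Wnn[OF P] w1[of P] by auto
          then have me: "ennreal ((10 * \<Phi> u v) * (W P * w P)) = ennreal (10 * \<Phi> u v) * ennreal (W P * w P)"
            by (rule ennreal_mult)
          show ?thesis unfolding c_def by (simp only: if_P[OF True] eq me)
        qed simp
      qed
      also have "\<dots> = c * infsum (\<lambda>P. if edge_in u v P then ennreal (W P * w P) else 0) \<Gamma>"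
        by (rule infsum_cmult_ennreal)
      also have "infsum (\<lambda>P. if edge_in u v P then ennreal (W P * w P) else 0) \<Gamma> = B"
        unfolding B_def by (rule infsum_cong_neutral) auto
      also have "B \<le> ennreal (\<pi> u * Q u v * A)"
      proof -
        have pq: "\<pi> u * Q u v > 0" using pp uv True by simp
        have "ennreal (1 / (\<pi> u * Q u v)) * B \<le> congestion \<Omega> \<pi> Q Qt W r"
          unfolding congestion_def B_def \<Gamma>_def w_def
          by (rule SUP_upper2[of "(u,v)"]) (use uv ne True in auto)
        then have "ennreal (1 / (\<pi> u * Q u v)) * B \<le> ennreal A" using cong by simp
        then have "ennreal (\<pi> u * Q u v) * (ennreal (1 / (\<pi> u * Q u v)) * B) \<le> ennreal (\<pi> u * Q u v) * ennreal A"
          by (rule mult_left_mono) simp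
        moreover have "ennreal (\<pi> u * Q u v) * ennreal (1 / (\<pi> u * Q u v)) = 1"
        proof -
          have "ennreal (\<pi> u * Q u v) * ennreal (1 / (\<pi> u * Q u v)) = ennreal ((\<pi> u * Q u v) * (1 / (\<pi> u * Q u v)))"
            using pq by (intro ennreal_mult[symmetric]) auto
          also have "(\<pi> u * Q u v) * (1 / (\<pi> u * Q u v)) = 1"
            using pq by (metis less_irrefl nonzero_mult_div_cancel_left div_by_1 times_divide_eq_right)
          finally show ?thesis by simp
        qed
        ultimately show ?thesis using pq A0 by (simp add: mult.assoc[symmetric] ennreal_mult)
      qed
      finally have "infsum (\<lambda>P. ennreal (10 * W P * w P * (if edge_in u v P then \<Phi> u v else 0))) \<Gamma>
          \<le> c * ennreal (\<pi> u * Q u v * A)" by (simp add: mult_left_mono)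
      also have "\<dots> = ennreal (10 * A * tm \<pi> Q u v)"
      proof -
        have "c * ennreal (\<pi> u * Q u v * A) = ennreal ((10 * \<Phi> u v) * (\<pi> u * Q u v * A))"
          unfolding c_def using \<Phi>0[OF uv] pp uv True A0 by (intro ennreal_mult[symmetric]) auto
        also have "(10 * \<Phi> u v) * (\<pi> u * Q u v * A) = 10 * A * tm \<pi> Q u v"
          unfolding tm\<Phi> by (simp add: algebra_simps)
        finally show ?thesis .
      qed
      finally show ?thesis unfolding e fst_conv snd_conv .
    qed
  qed

  have step6: "(\<Sum>e\<in>OM. ennreal (10 * A * tm \<pi> Q (fst e) (snd e))) = ennreal (10 * A * S)"
  proof -
    have "(\<Sum>e\<in>OM. ennreal (10 * A * tm \<pi> Q (fst e) (snd e))) = ennreal (\<Sum>e\<in>OM. 10 * A * tm \<pi> Q (fst e) (snd e))"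
      using tm0 A0 unfolding OM_def by (subst sum_ennreal) auto
    also have "(\<Sum>e\<in>OM. 10 * A * tm \<pi> Q (fst e) (snd e)) = 10 * A * S"
      unfolding S_def OM_def sum.cartesian_product sum_distrib_left by (simp add: case_prod_beta)
    finally show ?thesis .
  qed

  have "ennreal St \<le> ennreal (10 * A * S)"
  proof -
    have "ennreal St \<le> (\<Sum>e\<in>T. infsum h (paths \<Omega> Q (fst e) (snd e)))"
      unfolding step1 by (rule sum_mono) (rule step2)
    also have "\<dots> = infsum h \<Gamma>" by (rule step3)
    also have "\<dots> \<le> (\<Sum>e\<in>OM. ennreal (10 * A * tm \<pi> Q (fst e) (snd e)))"
      unfolding step4 by (rule sum_mono) (rule step5)
    also have "\<dots> = ennreal (10 * A * S)" by (rule step6)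
    finally show ?thesis .
  qed
  moreover have "S \<ge> 0" unfolding S_def using tm0 by (intro sum_nonneg) auto
  ultimately have "St \<le> 10 * A * S" using A0 by simp
  moreover have "Dir \<Omega> \<pi>t Qt f = St / 2" "Dir \<Omega> \<pi> Q f = S / 2"
    unfolding Dir_def St_def S_def tm_def by simp_all
  ultimately have "Dir \<Omega> \<pi>t Qt f * 2 \<le> 10 * A * (Dir \<Omega> \<pi> Q f * 2)" by simp
  moreover have "10 * A * (Dir \<Omega> \<pi> Q f * 2) = (10 * A * Dir \<Omega> \<pi> Q f) * 2" by simp
  ultimately show ?thesis by linarith
qed



lemma alpha_reg_le:
  assumes "\<alpha> \<ge> 0" "\<forall>f. regular \<Omega> Q r f \<longrightarrow> Ent \<Omega> \<pi> f \<le> \<alpha> * Dir \<Omega> \<pi> Q f"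
  shows "alpha_reg \<Omega> \<pi> Q r \<le> ennreal \<alpha>"
  unfolding alpha_reg_def by (rule Inf_lower) (use assms in blast)

theorem theorem2:
  shows "\<exists>C::real. C > 0 \<and>
    (\<forall>(\<Omega>::nat set) \<pi> Q \<pi>t Qt W (a::real) (\<alpha>t::real) (r::real).
       finite \<Omega> \<and> \<Omega> \<noteq> {} \<and>
       reversible_gen \<Omega> \<pi> Q \<and> reversible_gen \<Omega> \<pi>t Qt \<and>
       is_flow \<Omega> Q \<pi>t Qt W \<and>
       a > 0 \<and> (\<forall>\<omega>\<in>\<Omega>. \<pi> \<omega> \<le> a * \<pi>t \<omega>) \<and>
       MLSI \<Omega> \<pi>t Qt \<alpha>t \<and> r \<ge> 2
       \<longrightarrow> alpha_reg \<Omega> \<pi> Q r \<le>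
             ennreal C * ennreal a * congestion \<Omega> \<pi> Q Qt W r * ennreal \<alpha>t)"
proof (intro exI[of _ "10::real"] conjI allI impI)
  show "(10::real) > 0" by simp
  fix \<Omega> :: "nat set" and \<pi> Q \<pi>t Qt W and a \<alpha>t r :: real
  assume H: "finite \<Omega> \<and> \<Omega> \<noteq> {} \<and>
       reversible_gen \<Omega> \<pi> Q \<and> reversible_gen \<Omega> \<pi>t Qt \<and>
       is_flow \<Omega> Q \<pi>t Qt W \<and>
       a > 0 \<and> (\<forall>\<omega>\<in>\<Omega>. \<pi> \<omega> \<le> a * \<pi>t \<omega>) \<and>
       MLSI \<Omega> \<pi>t Qt \<alpha>t \<and> r \<ge> 2"
  then have fin: "finite \<Omega>" and r1: "reversible_gen \<Omega> \<pi> Q" and r2: "reversible_gen \<Omega> \<pi>t Qt"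
    and fl: "is_flow \<Omega> Q \<pi>t Qt W" and a: "a > 0" and pa: "\<forall>\<omega>\<in>\<Omega>. \<pi> \<omega> \<le> a * \<pi>t \<omega>"
    and ml: "MLSI \<Omega> \<pi>t Qt \<alpha>t" and r: "r \<ge> 2" by auto
  have base: "Ent \<Omega> \<pi> f \<le> a * (\<alpha>t * Dir \<Omega> \<pi>t Qt f)" if reg: "regular \<Omega> Q r f" for f
  proof -
    have fpos: "\<forall>x\<in>\<Omega>. f x > 0" using reg unfolding regular_def by simp
    have "Ent \<Omega> \<pi> f \<le> a * Ent \<Omega> \<pi>t f" by (rule Ent_compare[OF fin r1 r2 pa fpos])
    also have "\<dots> \<le> a * (\<alpha>t * Dir \<Omega> \<pi>t Qt f)"
      using ml fpos a unfolding MLSI_def by (intro mult_left_mono) auto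
    finally show ?thesis .
  qed
  show "alpha_reg \<Omega> \<pi> Q r \<le> ennreal 10 * ennreal a * congestion \<Omega> \<pi> Q Qt W r * ennreal \<alpha>t"
  proof (cases "\<alpha>t \<le> 0")
    case True
    have "alpha_reg \<Omega> \<pi> Q r \<le> ennreal 0"
    proof (rule alpha_reg_le)
      show "\<forall>f. regular \<Omega> Q r f \<longrightarrow> Ent \<Omega> \<pi> f \<le> 0 * Dir \<Omega> \<pi> Q f"
      proof (intro allI impI)
        fix f assume reg: "regular \<Omega> Q r f"
        have fpos: "\<forall>x\<in>\<Omega>. f x > 0" using reg unfolding regular_def by simp
        have "Dir \<Omega> \<pi>t Qt f \<ge> 0" by (rule Dir_nonneg[OF r2 fpos])
        then have "\<alpha>t * Dir \<Omega> \<pi>t Qt f \<le> 0" using True by (simp add: mult_nonpos_nonneg)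
        then have "a * (\<alpha>t * Dir \<Omega> \<pi>t Qt f) \<le> 0" using a by (simp add: mult_nonneg_nonpos)
        then show "Ent \<Omega> \<pi> f \<le> 0 * Dir \<Omega> \<pi> Q f" using base[OF reg] by simp
      qed
    qed simp
    then show ?thesis by simp
  next
    case False
    then have at: "\<alpha>t > 0" by simp
    show ?thesis
    proof (cases "congestion \<Omega> \<pi> Q Qt W r = top")
      case True
      have "ennreal 10 * ennreal a \<noteq> 0" using a by simp
      then have "ennreal 10 * ennreal a * congestion \<Omega> \<pi> Q Qt W r = top"
        unfolding True by (simp add: ennreal_mult_top)
      moreover have "(top::ennreal) * ennreal \<alpha>t = top" using at by (simp add: ennreal_top_mult)
      ultimately show ?thesis by simp
    next
      case False
      then obtain A where A: "congestion \<Omega> \<pi> Q Qt W r = ennreal A" "A \<ge> 0"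
        by (cases "congestion \<Omega> \<pi> Q Qt W r") auto
      have "alpha_reg \<Omega> \<pi> Q r \<le> ennreal (10 * a * A * \<alpha>t)"
      proof (rule alpha_reg_le)
        show "10 * a * A * \<alpha>t \<ge> 0" using a A(2) at by simp
        show "\<forall>f. regular \<Omega> Q r f \<longrightarrow> Ent \<Omega> \<pi> f \<le> (10 * a * A * \<alpha>t) * Dir \<Omega> \<pi> Q f"
        proof (intro allI impI)
          fix f assume reg: "regular \<Omega> Q r f"
          have "Dir \<Omega> \<pi>t Qt f \<le> 10 * A * Dir \<Omega> \<pi> Q f" by (rule Dir_compare[OF fin r1 r2 fl r reg A])
          then have "\<alpha>t * Dir \<Omega> \<pi>t Qt f \<le> \<alpha>t * (10 * A * Dir \<Omega> \<pi> Q f)" by (rule mult_left_mono) (use at in auto)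
          then have "a * (\<alpha>t * Dir \<Omega> \<pi>t Qt f) \<le> a * (\<alpha>t * (10 * A * Dir \<Omega> \<pi> Q f))" by (rule mult_left_mono) (use a in auto)
          also have "\<dots> = (10 * a * A * \<alpha>t) * Dir \<Omega> \<pi> Q f" by (simp add: algebra_simps)
          finally show "Ent \<Omega> \<pi> f \<le> (10 * a * A * \<alpha>t) * Dir \<Omega> \<pi> Q f" using base[OF reg] by linarith
        qed
      qed
      also have "ennreal (10 * a * A * \<alpha>t) = ennreal 10 * ennreal a * ennreal A * ennreal \<alpha>t"
        using a A(2) at by (simp add: ennreal_mult)
      finally show ?thesis unfolding A(1) .
    qed
  qed
qed


end
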